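(* Let $T\in\mathbb{T}$. Then every alternating path in $T$ has length at most three.
   Context: $\mathbb{T}$ is the class of simple undirected weighted trees $T$ (nonzero real weights on edges) such that (i) $T$ has at least one non-pendant vertex, and (ii) every non-pendant vertex of $T$ is adjacent to at least one pendant vertex (a vertex of degree one). Given a maximum matching $M$ of $T$, a path is alternating with respect to $M$ if its edges are alternately in $M$ and not in $M$, with first and last edges in $M$; an alternating path in $T$ is a path alternating with respect to some maximum matching of $T$. *)

theory Defs
  imports Complex_Main
begin

definition simple_graph :: "'a set \<Rightarrow> 'a set set \<Rightarrow> bool" where
  "simple_graph V E \<longleftrightarrow> finite V \<and>
     (\<forall>e\<in>E. \<exists>u v. e = {u, v} \<and> u \<noteq> v \<and> u \<in> V \<and> v \<in> V)"

definition is_path :: "'a set \<Rightarrow> 'a set set \<Rightarrow> 'a list \<Rightarrow> bool" where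
  "is_path V E p \<longleftrightarrow> p \<noteq> [] \<and> set p \<subseteq> V \<and> distinct p \<and>
     (\<forall>i. Suc i < length p \<longrightarrow> {p ! i, p ! Suc i} \<in> E)"

definition path_length :: "'a list \<Rightarrow> nat" where
  "path_length p = length p - 1"

definition path_edge :: "'a list \<Rightarrow> nat \<Rightarrow> 'a set" where
  "path_edge p i = {p ! i, p ! Suc i}"

definition connected_graph :: "'a set \<Rightarrow> 'a set set \<Rightarrow> bool" where
  "connected_graph V E \<longleftrightarrow>
     (\<forall>u\<in>V. \<forall>v\<in>V. \<exists>p. is_path V E p \<and> hd p = u \<and> last p = v)"

definition is_cycle :: "'a set \<Rightarrow> 'a set set \<Rightarrow> 'a list \<Rightarrow> bool" where
  "is_cycle V E c \<longleftrightarrow> is_path V E c \<and> length c \<ge> 3 \<and> {last c, hd c} \<in> E"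

definition acyclic_graph :: "'a set \<Rightarrow> 'a set set \<Rightarrow> bool" where
  "acyclic_graph V E \<longleftrightarrow> (\<nexists>c. is_cycle V E c)"

definition is_tree :: "'a set \<Rightarrow> 'a set set \<Rightarrow> bool" where
  "is_tree V E \<longleftrightarrow> simple_graph V E \<and> V \<noteq> {} \<and> connected_graph V E \<and> acyclic_graph V E"

definition degree :: "'a set set \<Rightarrow> 'a \<Rightarrow> nat" where
  "degree E v = card {e \<in> E. v \<in> e}"

definition pendant :: "'a set set \<Rightarrow> 'a \<Rightarrow> bool" where
  "pendant E v \<longleftrightarrow> degree E v = 1"

definition in_class_T :: "'a set \<Rightarrow> 'a set set \<Rightarrow> ('a set \<Rightarrow> real) \<Rightarrow> bool" where
  "in_class_T V E w \<longleftrightarrow> is_tree V E \<and> (\<forall>e\<in>E. w e \<noteq> 0) \<and>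
     (\<exists>v\<in>V. \<not> pendant E v) \<and>
     (\<forall>v\<in>V. \<not> pendant E v \<longrightarrow> (\<exists>u\<in>V. {u, v} \<in> E \<and> pendant E u))"

definition matching :: "'a set set \<Rightarrow> 'a set set \<Rightarrow> bool" where
  "matching E M \<longleftrightarrow> M \<subseteq> E \<and> (\<forall>e1\<in>M. \<forall>e2\<in>M. e1 \<noteq> e2 \<longrightarrow> e1 \<inter> e2 = {})"

definition maximum_matching :: "'a set set \<Rightarrow> 'a set set \<Rightarrow> bool" where
  "maximum_matching E M \<longleftrightarrow> matching E M \<and>
     (\<forall>M'. matching E M' \<longrightarrow> card M' \<le> card M)"

definition alternating_path_wrt :: "'a set \<Rightarrow> 'a set set \<Rightarrow> 'a set set \<Rightarrow> 'a list \<Rightarrow> bool" where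
  "alternating_path_wrt V E M p \<longleftrightarrow> is_path V E p \<and> path_length p \<ge> 1 \<and>
     (\<forall>i < path_length p. (path_edge p i \<in> M \<longleftrightarrow> even i)) \<and>
     path_edge p (path_length p - 1) \<in> M"

definition alternating_path :: "'a set \<Rightarrow> 'a set set \<Rightarrow> 'a list \<Rightarrow> bool" where
  "alternating_path V E p \<longleftrightarrow> (\<exists>M. maximum_matching E M \<and> alternating_path_wrt V E M p)"

end

theory Submission
  imports Defs
begin
lemma pendant_unique:
  assumes "pendant E u" "{u,x} \<in> E" "e \<in> E" "u \<in> e"
  shows "e = {u,x}"
proof -
  have "card {e \<in> E. u \<in> e} = 1" using assms(1) by (simp add: pendant_def degree_def)
  then obtain y where y: "{e \<in> E. u \<in> e} = {y}" by (metis One_nat_def card_1_singleton_iff)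
  have "e \<in> {e \<in> E. u \<in> e}" "{u,x} \<in> {e \<in> E. u \<in> e}" using assms by auto
  then show ?thesis unfolding y by simp
qed
lemma not_pendant2:
  assumes "e1 \<in> E" "e2 \<in> E" "v \<in> e1" "v \<in> e2" "e1 \<noteq> e2"
  shows "\<not> pendant E v"
proof
  assume "pendant E v"
  then have "card {e \<in> E. v \<in> e} = 1" by (simp add: pendant_def degree_def)
  then obtain y where y: "{e \<in> E. v \<in> e} = {y}" by (metis One_nat_def card_1_singleton_iff)
  have "e1 \<in> {e \<in> E. v \<in> e}" "e2 \<in> {e \<in> E. v \<in> e}" using assms by auto
  then show False unfolding y using assms(5) by simp
qed

lemma edge_ne:
  assumes "simple_graph V E" "{x,y} \<in> E" shows "x \<noteq> y"
proof
  assume xy: "x = y"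
  from assms obtain u v where uv: "{x,y} = {u,v}" "u \<noteq> v" unfolding simple_graph_def by blast
  have "u \<in> {x,y}" "v \<in> {x,y}" using uv(1) by auto
  then show False using xy uv(2) by simp
qed
lemma main_contra:
  assumes sg: "simple_graph V E" and fin: "finite E"
    and mm: "maximum_matching E M" and ab: "{a,b} \<in> M"
    and na: "\<not> pendant E a" and nb: "\<not> pendant E b"
    and pa: "pendant E ua" "{ua,a} \<in> E"
    and pb: "pendant E ub" "{ub,b} \<in> E"
  shows False
proof -
  have mat: "matching E M" and mx: "\<And>M'. matching E M' \<Longrightarrow> card M' \<le> card M"
    using mm by (auto simp: maximum_matching_def)
  have ME: "M \<subseteq> E" and dis: "\<And>e1 e2. e1 \<in> M \<Longrightarrow> e2 \<in> M \<Longrightarrow> e1 \<noteq> e2 \<Longrightarrow> e1 \<inter> e2 = {}"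
    using mat by (auto simp: matching_def)
  have abE: "{a,b} \<in> E" using ab ME by auto
  have "a \<noteq> b" using edge_ne[OF sg abE] .
  have "ua \<noteq> a" using edge_ne[OF sg pa(2)] .
  have "ub \<noteq> b" using edge_ne[OF sg pb(2)] .
  have "ua \<noteq> b" using pa nb by auto
  have "ub \<noteq> a" using pb na by auto
  have "ua \<noteq> ub"
  proof
    assume "ua = ub"
    then have "{ub,b} = {ua,a}" using pendant_unique[OF pa, of "{ub,b}"] pb by auto
    then show False using \<open>ub \<noteq> a\<close> \<open>a \<noteq> b\<close> by (metis doubleton_eq_iff)
  qed
  have uaM: "ua \<notin> e" if "e \<in> M" for e
  proof
    assume "ua \<in> e"
    then have "e = {ua,a}" using pendant_unique[OF pa, of e] that ME by auto
    then have "e \<noteq> {a,b}" using \<open>ua \<noteq> a\<close> \<open>ua \<noteq> b\<close> by auto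
    then have "e \<inter> {a,b} = {}" using dis that ab by auto
    then show False using \<open>e = {ua,a}\<close> by auto
  qed
  have ubM: "ub \<notin> e" if "e \<in> M" for e
  proof
    assume "ub \<in> e"
    then have "e = {ub,b}" using pendant_unique[OF pb, of e] that ME by auto
    then have "e \<noteq> {a,b}" using \<open>ub \<noteq> a\<close> \<open>ub \<noteq> b\<close> by auto
    then have "e \<inter> {a,b} = {}" using dis that ab by auto
    then show False using \<open>e = {ub,b}\<close> by auto
  qed
  have abM: "a \<notin> e \<and> b \<notin> e" if "e \<in> M" "e \<noteq> {a,b}" for e
    using dis[OF that(1) ab that(2)] by auto
  define M' where "M' = (M - {{a,b}}) \<union> {{ua,a},{ub,b}}"
  have "matching E M'"
    unfolding matching_def M'_def
  proof (intro conjI ballI impI)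
    show "M - {{a, b}} \<union> {{ua, a}, {ub, b}} \<subseteq> E" using ME pa pb by auto
  next
    fix e1 e2 assume e1: "e1 \<in> M - {{a, b}} \<union> {{ua, a}, {ub, b}}"
      and e2: "e2 \<in> M - {{a, b}} \<union> {{ua, a}, {ub, b}}" and ne: "e1 \<noteq> e2"
    show "e1 \<inter> e2 = {}"
    proof -
      have c: "e1 \<in> M - {{a,b}} \<or> e1 = {ua,a} \<or> e1 = {ub,b}" using e1 by auto
      have d: "e2 \<in> M - {{a,b}} \<or> e2 = {ua,a} \<or> e2 = {ub,b}" using e2 by auto
      show ?thesis
      proof (cases "e1 \<in> M - {{a,b}}")
        case True
        note t1 = abM[of e1] uaM[of e1] ubM[of e1]
        show ?thesis
        proof (cases "e2 \<in> M - {{a,b}}")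
          case True
          then show ?thesis using dis[of e1 e2] \<open>e1 \<in> M - {{a,b}}\<close> ne by auto
        next
          case False
          then show ?thesis using d t1 True by auto
        qed
      next
        case False
        then have e1': "e1 = {ua,a} \<or> e1 = {ub,b}" using c by auto
        show ?thesis
        proof (cases "e2 \<in> M - {{a,b}}")
          case True
          then show ?thesis using e1' abM[of e2] uaM[of e2] ubM[of e2] by auto
        next
          case False
          then have "e2 = {ua,a} \<or> e2 = {ub,b}" using d by auto
          then show ?thesis using e1' ne \<open>ua \<noteq> ub\<close> \<open>ua \<noteq> b\<close> \<open>ub \<noteq> a\<close> \<open>a \<noteq> b\<close> by auto
        qed
      qed
    qed
  qed
  have finM: "finite M" using fin ME finite_subset by auto
  have n1: "{ua,a} \<notin> M" using uaM by auto
  have n2: "{ub,b} \<notin> M" using ubM by auto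
  have n3: "{ua,a} \<noteq> {ub,b}" using \<open>ua \<noteq> ub\<close> \<open>ua \<noteq> b\<close> by (simp add: doubleton_eq_iff)
  have "card M' = card (M - {{a,b}}) + 2"
    unfolding M'_def using finM n1 n2 n3 by (simp add: card_insert_if)
  also have "\<dots> = card M + 1" using finM ab by (simp add: card_Diff_singleton)
    (metis Suc_pred card_gt_0_iff empty_iff)
  finally have "card M' = card M + 1" .
  with mx[OF \<open>matching E M'\<close>] show False by simp
qed

theorem corollary3p4:
  fixes V :: "'a set" and E :: "'a set set" and w :: "'a set \<Rightarrow> real" and p :: "'a list"
  assumes "in_class_T V E w"
    and "alternating_path V E p"
  shows "path_length p \<le> 3"
proof (rule ccontr)
  assume "\<not> path_length p \<le> 3"
  then have len: "length p \<ge> 5" by (simp add: path_length_def)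
  obtain M where mm: "maximum_matching E M" and alt: "alternating_path_wrt V E M p"
    using assms(2) unfolding alternating_path_def by blast
  have tr: "is_tree V E" and cls: "\<forall>v\<in>V. \<not> pendant E v \<longrightarrow> (\<exists>u\<in>V. {u, v} \<in> E \<and> pendant E u)"
    using assms(1) unfolding in_class_T_def by blast+
  have sg: "simple_graph V E" using tr unfolding is_tree_def by blast
  have finV: "finite V" using sg by (simp add: simple_graph_def)
  have "E \<subseteq> Pow V"
  proof
    fix e assume "e \<in> E"
    then obtain u v where "e = {u,v}" "u \<in> V" "v \<in> V" using sg unfolding simple_graph_def by blast
    then show "e \<in> Pow V" by simp
  qed
  then have fin: "finite E" using finV by (meson finite_Pow_iff finite_subset)
  have pth: "is_path V E p" and altc: "\<forall>i < path_length p. (path_edge p i \<in> M \<longleftrightarrow> even i)"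
    using alt unfolding alternating_path_wrt_def by blast+
  have "2 < path_length p" using len by (simp add: path_length_def)
  then have e2: "path_edge p 2 \<in> M" using altc by simp
  have dist: "distinct p" and sub: "set p \<subseteq> V" and adj: "\<And>i. Suc i < length p \<Longrightarrow> {p ! i, p ! Suc i} \<in> E"
    using pth unfolding is_path_def by blast+
  have E1: "{p!1, p!2} \<in> E" using adj[of 1] len by (simp add: numeral_eq_Suc)
  have E2: "{p!2, p!3} \<in> E" using adj[of 2] len by (simp add: numeral_eq_Suc)
  have E3: "{p!3, p!4} \<in> E" using adj[of 3] len by (simp add: numeral_eq_Suc)
  have d13: "p!1 \<noteq> p!3" using dist len by (simp add: nth_eq_iff_index_eq)
  have d24: "p!2 \<noteq> p!4" using dist len by (simp add: nth_eq_iff_index_eq)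
  have d12: "p!1 \<noteq> p!2" using dist len by (simp add: nth_eq_iff_index_eq)
  have d23: "p!2 \<noteq> p!3" using dist len by (simp add: nth_eq_iff_index_eq)
  have d34: "p!3 \<noteq> p!4" using dist len by (simp add: nth_eq_iff_index_eq)
  have "{p!1, p!2} \<noteq> {p!2, p!3}" using d13 d12 d23 by (simp add: doubleton_eq_iff)
  then have n2: "\<not> pendant E (p!2)"
    by (intro not_pendant2[OF E1 E2]) simp_all
  have "{p!2, p!3} \<noteq> {p!3, p!4}" using d24 d23 d34 by (simp add: doubleton_eq_iff)
  then have n3: "\<not> pendant E (p!3)"
    by (intro not_pendant2[OF E2 E3]) simp_all
  have v2: "p!2 \<in> V" and v3: "p!3 \<in> V" using sub len by auto
  obtain ua where ua: "{ua, p!2} \<in> E" "pendant E ua" using cls v2 n2 by blast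
  obtain ub where ub: "{ub, p!3} \<in> E" "pendant E ub" using cls v3 n3 by blast
  have m: "{p!2, p!3} \<in> M" using e2 by (simp add: path_edge_def numeral_eq_Suc)
  show False by (rule main_contra[OF sg fin mm m n2 n3 ua(2) ua(1) ub(2) ub(1)])
qed

end
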